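(* Let $\mathcal{G}$, $u$, $v$ be as in the context (finite bicoloured graph with a pure green path from $u$ to $v$), and let $e$ be a red edge whose weight $\omega(e)$ is a random variable with probability density function $f_e:(0,\infty)\to[0,\phi_e]$ for some $\phi_e>0$, independent of all other edge weights. Then for every $r\ge0$ and $\varepsilon\ge0$, $$\mathbb{P}\big(r<\Delta_e(r)\le r+\varepsilon\big)\le\phi_e\cdot\varepsilon .$$
   Context: $\mathcal{G}=\langle V,E,\omega,\lambda\rangle$ is a finite weighted coloured--edge graph (directed multigraph, weights $\omega:E\to\mathbb{R}^+$, colours $\lambda:E\to M$) with $M=\{\text{red},\text{green}\}$. A path from $u$ to $v$ is a sequence of consecutive edges from $u$ to $v$ visiting no vertex twice; $\omega_{\text{red}}(p)$, $\omega_{\text{green}}(p)$ denote the sums of weights of the red, resp. green, edges of $p$. It is assumed there is a path from $u$ to $v$ all of whose edges are green. For a red edge $e$ and $r\ge0$, define: $g_r$ is the least value of $\omega_{\text{green}}(p)$ over all paths $p$ from $u$ to $v$ not containing $e$ with $\omega_{\text{red}}(p)\le r$ (such paths exist, e.g. the pure green path, provided it avoids $e$, which it does since $e$ is red). Then $\Delta_e(r)$ is the least value of $\omega_{\text{red}}(q)$ over all paths $q$ from $u$ to $v$ that contain $e$ and satisfy $\omega_{\text{green}}(q)<g_r$; if there is no such path, $\Delta_e(r)=\infty$. (Thus $\Delta_e(r)$ is a random variable when edge weights are random.) *)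

theory Defs
  imports "HOL-Probability.Probability"
begin

datatype colour = Red | Green

text \<open>A directed multigraph: vertex set V, edge set E, each edge d goes from src d to tgt d.
  A path from u to v is a list of consecutive edges of E visiting no vertex twice.\<close>
definition is_path :: "'e set \<Rightarrow> ('e \<Rightarrow> 'v) \<Rightarrow> ('e \<Rightarrow> 'v) \<Rightarrow> 'v \<Rightarrow> 'v \<Rightarrow> 'e list \<Rightarrow> bool" where
  "is_path E src tgt u v p \<longleftrightarrow>
     set p \<subseteq> E \<and>
     (p = [] \<longrightarrow> u = v) \<and>
     (p \<noteq> [] \<longrightarrow> src (p ! 0) = u \<and> tgt (last p) = v) \<and>
     (\<forall>i. Suc i < length p \<longrightarrow> tgt (p ! i) = src (p ! Suc i)) \<and>
     distinct (u # map tgt p)"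

definition red_w :: "('e \<Rightarrow> colour) \<Rightarrow> ('e \<Rightarrow> real) \<Rightarrow> 'e list \<Rightarrow> real" where
  "red_w col w p = sum_list (map (\<lambda>d. if col d = Red then w d else 0) p)"

definition green_w :: "('e \<Rightarrow> colour) \<Rightarrow> ('e \<Rightarrow> real) \<Rightarrow> 'e list \<Rightarrow> real" where
  "green_w col w p = sum_list (map (\<lambda>d. if col d = Green then w d else 0) p)"

definition g_val :: "'e set \<Rightarrow> ('e \<Rightarrow> 'v) \<Rightarrow> ('e \<Rightarrow> 'v) \<Rightarrow> ('e \<Rightarrow> colour) \<Rightarrow> ('e \<Rightarrow> real)
    \<Rightarrow> 'v \<Rightarrow> 'v \<Rightarrow> 'e \<Rightarrow> real \<Rightarrow> real" where
  "g_val E src tgt col w u v e r =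
     Min {green_w col w p | p. is_path E src tgt u v p \<and> e \<notin> set p \<and> red_w col w p \<le> r}"

definition Delta :: "'e set \<Rightarrow> ('e \<Rightarrow> 'v) \<Rightarrow> ('e \<Rightarrow> 'v) \<Rightarrow> ('e \<Rightarrow> colour) \<Rightarrow> ('e \<Rightarrow> real)
    \<Rightarrow> 'v \<Rightarrow> 'v \<Rightarrow> 'e \<Rightarrow> real \<Rightarrow> ereal" where
  "Delta E src tgt col w u v e r =
     (let S = {red_w col w q | q. is_path E src tgt u v q \<and> e \<in> set q \<and>
                  green_w col w q < g_val E src tgt col w u v e r}
      in if S = {} then \<infinity> else ereal (Min S))"

end

theory Submission
  imports Defs
begin


lemma path_distinct: "is_path E src tgt u v p \<Longrightarrow> distinct p"
  unfolding is_path_def by (auto simp: distinct_map)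

lemma paths_finite:
  assumes "finite E" shows "finite {p. is_path E src tgt u v p}"
proof (rule finite_subset[OF _ finite_lists_length_le[OF assms, of "card E"]])
  show "{p. is_path E src tgt u v p} \<subseteq> {xs. set xs \<subseteq> E \<and> length xs \<le> card E}"
  proof safe
    fix p assume p: "is_path E src tgt u v p"
    then have "set p \<subseteq> E" by (simp add: is_path_def)
    moreover have "length p = card (set p)" using path_distinct[OF p] by (simp add: distinct_card)
    ultimately show "length p \<le> card E" using card_mono[OF assms] by auto
    show "x \<in> set p \<Longrightarrow> x \<in> E" for x using \<open>set p \<subseteq> E\<close> by auto
  qed
qed

lemma green_upd: "col e = Red \<Longrightarrow> green_w col (w(e:=c)) q = green_w col w q"
  unfolding green_w_def by (intro arg_cong[where f=sum_list] map_cong) auto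

lemma red_notin: "e \<notin> set q \<Longrightarrow> red_w col (w(e:=c)) q = red_w col w q"
  unfolding red_w_def by (intro arg_cong[where f=sum_list] map_cong) auto

lemma red_Cons: "red_w col w (a#q) = (if col a = Red then w a else 0) + red_w col w q"
  by (simp add: red_w_def)

lemma red_split: "e \<in> set q \<Longrightarrow> distinct q \<Longrightarrow> col e = Red \<Longrightarrow>
   red_w col w q = w e + red_w col (w(e:=0)) q"
proof (induction q)
  case Nil then show ?case by simp
next
  case (Cons a q)
  show ?case
  proof (cases "a = e")
    case True
    then have "e \<notin> set q" using Cons by auto
    then show ?thesis using True Cons.prems red_notin[of e q col w 0]
      by (simp only: red_Cons) simp
  next
    case False
    have IH: "red_w col w q = w e + red_w col (w(e:=0)) q"
      by (rule Cons.IH) (use Cons.prems False in auto)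
    have wa: "(w(e:=0)) a = w a" using False by simp
    show ?thesis by (simp only: red_Cons wa IH)
  qed
qed

lemma g_upd: "col e = Red \<Longrightarrow> g_val E src tgt col (w(e:=c)) u v e r = g_val E src tgt col w u v e r"
  unfolding g_val_def using green_upd[of col e w c] red_notin[of e _ col w c] by metis

lemma Delta_shift:
  assumes "finite E" "col e = Red"
  shows "Delta E src tgt col w u v e r = ereal (w e) + Delta E src tgt col (w(e:=0)) u v e r"
proof -
  define S where "S w' = {red_w col w' q | q. is_path E src tgt u v q \<and> e \<in> set q \<and>
                  green_w col w' q < g_val E src tgt col w' u v e r}" for w'
  have g0: "g_val E src tgt col (w(e:=0)) u v e r = g_val E src tgt col w u v e r"
    by (rule g_upd[of col e E src tgt w 0 u v r, OF assms(2)])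
  have gr0: "green_w col (w(e:=0)) q = green_w col w q" for q
    by (rule green_upd[of col e w 0, OF assms(2)])
  have rs: "is_path E src tgt u v q \<Longrightarrow> e \<in> set q \<Longrightarrow> red_w col w q = w e + red_w col (w(e:=0)) q" for q
    using red_split[of e q col w, OF _ _ assms(2)] path_distinct[of E src tgt u v q] by blast
  have SS: "S w = (\<lambda>s. w e + s) ` S (w(e:=0))"
  proof
    show "S w \<subseteq> (\<lambda>s. w e + s) ` S (w(e:=0))"
    proof
      fix s assume "s \<in> S w"
      then obtain q where q: "is_path E src tgt u v q" "e \<in> set q"
        "green_w col w q < g_val E src tgt col w u v e r" "s = red_w col w q" unfolding S_def by blast
      have m: "red_w col (w(e:=0)) q \<in> S (w(e:=0))" unfolding S_def g0 gr0 using q(1-3)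
        by (intro CollectI exI[of _ q]) simp
      have "s = w e + red_w col (w(e:=0)) q" using rs[OF q(1,2)] q(4) by simp
      then show "s \<in> (\<lambda>s. w e + s) ` S (w(e:=0))" using m by (rule image_eqI)
    qed
    show "(\<lambda>s. w e + s) ` S (w(e:=0)) \<subseteq> S w"
    proof
      fix s assume "s \<in> (\<lambda>s. w e + s) ` S (w(e:=0))"
      then obtain s0 where s0: "s0 \<in> S (w(e:=0))" "s = w e + s0" by blast
      then obtain q where q: "is_path E src tgt u v q" "e \<in> set q"
        "green_w col w q < g_val E src tgt col w u v e r" "s0 = red_w col (w(e:=0)) q"
        unfolding S_def g0 gr0 by blast
      have "s = w e + red_w col (w(e:=0)) q" using s0(2) q(4) by simp
      then have "s = red_w col w q" using rs[OF q(1,2)] by simp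
      then show "s \<in> S w" unfolding S_def using q(1-3) by (intro CollectI exI[of _ q]) simp
    qed
  qed
  have fin: "finite (S w')" for w'
  proof -
    have "S w' \<subseteq> red_w col w' ` {p. is_path E src tgt u v p}" unfolding S_def by blast
    then show ?thesis by (rule finite_subset[OF _ finite_imageI[OF paths_finite[OF assms(1)]]])
  qed
  have D: "Delta E src tgt col w' u v e r = (if S w' = {} then \<infinity> else ereal (Min (S w')))" for w'
    unfolding Delta_def Let_def S_def[symmetric] by (rule refl)
  show ?thesis
  proof (cases "S (w(e:=0)) = {}")
    case True then show ?thesis unfolding D SS by simp
  next
    case False
    have "Min ((\<lambda>s. w e + s) ` S (w(e:=0))) = w e + Min (S (w(e:=0)))"
      by (rule hom_Min_commute[symmetric, OF min_add_distrib_right fin False])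
    then show ?thesis unfolding D SS using False by simp
  qed
qed



lemma red_green0: "\<forall>d\<in>set p. col d = Green \<Longrightarrow> red_w col w p = 0"
  by (induction p) (auto simp: red_Cons red_w_def)

lemma g_Min:
  assumes "finite E" "col e = Red" "\<exists>p. is_path E src tgt u v p \<and> (\<forall>d\<in>set p. col d = Green)" "r \<ge> 0"
  shows "ereal (g_val E src tgt col w u v e r) =
    Min ((\<lambda>p. if red_w col w p \<le> r then ereal (green_w col w p) else \<infinity>) ` {p. is_path E src tgt u v p \<and> e \<notin> set p})"
proof -
  define T where "T = {green_w col w p | p. is_path E src tgt u v p \<and> e \<notin> set p \<and> red_w col w p \<le> r}"
  define Pa where "Pa = {p. is_path E src tgt u v p \<and> e \<notin> set p}"
  define h where "h p = (if red_w col w p \<le> r then ereal (green_w col w p) else \<infinity>)" for p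
  obtain p0 where p0: "is_path E src tgt u v p0" "\<forall>d\<in>set p0. col d = Green" using assms(3) by blast
  have p0e: "e \<notin> set p0" using p0(2) assms(2) by auto
  have "red_w col w p0 = 0" using red_green0[OF p0(2)] .
  then have "green_w col w p0 \<in> T" unfolding T_def using p0(1) p0e assms(4) by auto
  then have Tne: "T \<noteq> {}" by blast
  have finP: "finite Pa" unfolding Pa_def by (rule finite_subset[OF _ paths_finite[OF assms(1)]]) blast
  have "T \<subseteq> green_w col w ` Pa" unfolding T_def Pa_def by blast
  then have finT: "finite T" by (rule finite_subset[OF _ finite_imageI[OF finP]])
  have gT: "g_val E src tgt col w u v e r = Min T" unfolding g_val_def T_def ..
  have "Min T \<in> T" using finT Tne by (rule Min_in)
  then obtain p1 where p1: "p1 \<in> Pa" "red_w col w p1 \<le> r" "Min T = green_w col w p1"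
    unfolding T_def Pa_def by blast
  have "Min (h ` Pa) = ereal (Min T)"
  proof (rule Min_eqI)
    show "finite (h ` Pa)" using finP by simp
    show "ereal (Min T) \<in> h ` Pa" using p1 unfolding h_def by (intro image_eqI[of _ _ p1]) auto
    fix y assume "y \<in> h ` Pa"
    then obtain p where p: "p \<in> Pa" "y = h p" by blast
    show "ereal (Min T) \<le> y"
    proof (cases "red_w col w p \<le> r")
      case True
      then have "green_w col w p \<in> T" using p(1) unfolding T_def Pa_def by blast
      then have "Min T \<le> green_w col w p" by (rule Min_le[OF finT])
      then show ?thesis using p(2) True unfolding h_def by simp
    next
      case False then show ?thesis using p(2) unfolding h_def by simp
    qed
  qed
  then show ?thesis unfolding gT h_def Pa_def by simp
qed

lemma Delta_Min:
  assumes "finite E"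
  shows "Delta E src tgt col w u v e r = Min (insert \<infinity>
     ((\<lambda>q. if green_w col w q < g_val E src tgt col w u v e r then ereal (red_w col w q) else \<infinity>)
       ` {q. is_path E src tgt u v q \<and> e \<in> set q}))"
proof -
  define g where "g = g_val E src tgt col w u v e r"
  define S where "S = {red_w col w q | q. is_path E src tgt u v q \<and> e \<in> set q \<and> green_w col w q < g}"
  define Q where "Q = {q. is_path E src tgt u v q \<and> e \<in> set q}"
  define h where "h q = (if green_w col w q < g then ereal (red_w col w q) else \<infinity>)" for q
  have D: "Delta E src tgt col w u v e r = (if S = {} then \<infinity> else ereal (Min S))"
    unfolding Delta_def Let_def S_def g_def ..
  have finQ: "finite Q" unfolding Q_def by (rule finite_subset[OF _ paths_finite[OF assms(1)]]) blast
  have "S \<subseteq> red_w col w ` Q" unfolding S_def Q_def by blast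
  then have finS: "finite S" by (rule finite_subset[OF _ finite_imageI[OF finQ]])
  have fin: "finite (insert \<infinity> (h ` Q))" using finQ by simp
  have "Min (insert \<infinity> (h ` Q)) = (if S = {} then \<infinity> else ereal (Min S))"
  proof (cases "S = {}")
    case True
    have "\<forall>y\<in>insert \<infinity> (h ` Q). y = \<infinity>"
    proof
      fix y assume "y \<in> insert \<infinity> (h ` Q)"
      then consider "y = \<infinity>" | q where "q \<in> Q" "y = h q" by blast
      then show "y = \<infinity>"
      proof cases
        case 2
        have "\<not> green_w col w q < g"
        proof
          assume "green_w col w q < g"
          then have "red_w col w q \<in> S" using 2(1) unfolding S_def Q_def by blast
          then show False using True by blast
        qed
        then show ?thesis using 2(2) unfolding h_def by simp
      qed simp
    qed
    then have "Min (insert \<infinity> (h ` Q)) = \<infinity>" using fin by (intro Min_eqI) auto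
    then show ?thesis using True by simp
  next
    case False
    have "Min (insert \<infinity> (h ` Q)) = ereal (Min S)"
    proof (rule Min_eqI[OF fin])
      have "Min S \<in> S" using finS False by (rule Min_in)
      then obtain q where q: "q \<in> Q" "green_w col w q < g" "Min S = red_w col w q"
        unfolding S_def Q_def by blast
      then show "ereal (Min S) \<in> insert \<infinity> (h ` Q)" unfolding h_def by auto
      fix y assume "y \<in> insert \<infinity> (h ` Q)"
      then consider "y = \<infinity>" | q where "q \<in> Q" "y = h q" by blast
      then show "ereal (Min S) \<le> y"
      proof cases
        case 2
        show ?thesis
        proof (cases "green_w col w q < g")
          case True
          then have "red_w col w q \<in> S" using 2(1) unfolding S_def Q_def by blast
          then have "Min S \<le> red_w col w q" by (rule Min_le[OF finS])
          then show ?thesis using 2(2) True unfolding h_def by simp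
        next
          case False then show ?thesis using 2(2) unfolding h_def by simp
        qed
      qed simp
    qed
    then show ?thesis using False by simp
  qed
  then show ?thesis unfolding D h_def g_def Q_def by simp
qed

lemma meas_sum:
  "(\<And>d. d \<in> set q \<Longrightarrow> F d \<in> borel_measurable N) \<Longrightarrow>
   (\<lambda>x. sum_list (map (\<lambda>d. F d x) q) :: real) \<in> borel_measurable N"
  by (induction q) auto



lemma Delta_meas:
  fixes W :: "'m \<Rightarrow> 'e \<Rightarrow> real"
  assumes "finite E" "col e = Red" "\<exists>p. is_path E src tgt u v p \<and> (\<forall>d\<in>set p. col d = Green)" "r \<ge> 0"
    and Wm: "\<forall>d\<in>E-{e}. (\<lambda>x. W x d) \<in> borel_measurable N"
  shows "(\<lambda>x. Delta E src tgt col ((W x)(e:=0)) u v e r) \<in> borel_measurable N"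
proof -
  define P where "P = {p. is_path E src tgt u v p}"
  have finP: "finite P" unfolding P_def by (rule paths_finite[OF assms(1)])
  have PE: "p \<in> P \<Longrightarrow> set p \<subseteq> E" for p unfolding P_def is_path_def by blast
  have cm: "(\<lambda>x. (if col d = c then ((W x)(e:=0)) d else 0)) \<in> borel_measurable N" if "d \<in> E" for d c
  proof (cases "d = e")
    case True
    then have "(\<lambda>x. (if col d = c then ((W x)(e:=0)) d else 0)) = (\<lambda>x. 0)" by (auto simp: fun_upd_def)
    then show ?thesis by simp
  next
    case False
    then have "(\<lambda>x. (if col d = c then ((W x)(e:=0)) d else 0)) = (if col d = c then (\<lambda>x. W x d) else (\<lambda>x. 0))"
      by auto
    then show ?thesis using Wm False that by simp
  qed
  have red_m: "(\<lambda>x. red_w col ((W x)(e:=0)) p) \<in> borel_measurable N" if "p \<in> P" for p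
    unfolding red_w_def by (rule meas_sum) (use cm PE[OF that] in blast)
  have green_m: "(\<lambda>x. green_w col ((W x)(e:=0)) p) \<in> borel_measurable N" if "p \<in> P" for p
    unfolding green_w_def by (rule meas_sum) (use cm PE[OF that] in blast)
  define Pa where "Pa = {p. is_path E src tgt u v p \<and> e \<notin> set p}"
  define G where "G x = Min ((\<lambda>p. if red_w col ((W x)(e:=0)) p \<le> r then ereal (green_w col ((W x)(e:=0)) p) else \<infinity>) ` Pa)" for x
  have finPa: "finite Pa" unfolding Pa_def by (rule finite_subset[OF _ finP]) (auto simp: P_def)
  have Gm: "G \<in> borel_measurable N"
    unfolding G_def
  proof (rule borel_measurable_Min[OF finPa])
    fix p assume "p \<in> Pa"
    then have p: "p \<in> P" unfolding Pa_def P_def by blast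
    note [measurable] = red_m[OF p] green_m[OF p]
    show "(\<lambda>x. if red_w col ((W x)(e:=0)) p \<le> r then ereal (green_w col ((W x)(e:=0)) p) else \<infinity>) \<in> borel_measurable N"
      by measurable
  qed
  have gG: "ereal (g_val E src tgt col ((W x)(e:=0)) u v e r) = G x" for x
    unfolding G_def Pa_def by (rule g_Min[OF assms(1-4)])
  define Q where "Q = {q. is_path E src tgt u v q \<and> e \<in> set q}"
  have finQ: "finite Q" unfolding Q_def by (rule finite_subset[OF _ finP]) (auto simp: P_def)
  define k where "k ob x = (if ob = None then \<infinity> else
      (if ereal (green_w col ((W x)(e:=0)) (the ob)) < G x then ereal (red_w col ((W x)(e:=0)) (the ob)) else \<infinity>))" for ob x
  have eq: "Delta E src tgt col ((W x)(e:=0)) u v e r = Min ((\<lambda>ob. k ob x) ` insert None (Some ` Q))" for x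
  proof -
    have "\<And>q. (green_w col ((W x)(e:=0)) q < g_val E src tgt col ((W x)(e:=0)) u v e r) =
              (ereal (green_w col ((W x)(e:=0)) q) < G x)"
      unfolding gG[symmetric] by simp
    then show ?thesis unfolding Delta_Min[OF assms(1)] k_def Q_def image_insert image_image
      by simp
  qed
  have "(\<lambda>x. Min ((\<lambda>ob. k ob x) ` insert None (Some ` Q))) \<in> borel_measurable N"
  proof (rule borel_measurable_Min)
    show "finite (insert None (Some ` Q))" using finQ by simp
    fix ob assume "ob \<in> insert None (Some ` Q)"
    then consider "ob = None" | q where "q \<in> Q" "ob = Some q" by blast
    then show "k ob \<in> borel_measurable N"
    proof cases
      case 1 then show ?thesis unfolding k_def by simp
    next
      case 2
      then have p: "q \<in> P" unfolding Q_def P_def by blast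
      note [measurable] = red_m[OF p] green_m[OF p] Gm
      have "k ob = (\<lambda>x. if ereal (green_w col ((W x)(e:=0)) q) < G x then ereal (red_w col ((W x)(e:=0)) q) else \<infinity>)"
        unfolding k_def 2(2) by (simp add: fun_eq_iff)
      then show ?thesis by (simp only:) measurable
    qed
  qed
  then show ?thesis unfolding eq .
qed



theorem lemma4:
  fixes M :: "'m measure"
    and V :: "'v set" and E :: "'e set" and src tgt :: "'e \<Rightarrow> 'v"
    and col :: "'e \<Rightarrow> colour" and W :: "'m \<Rightarrow> 'e \<Rightarrow> real"
    and u v :: 'v and e :: 'e and f :: "real \<Rightarrow> real" and \<phi> r \<epsilon> :: real
  assumes "prob_space M"
    and "finite V" and "finite E"
    and "\<forall>d\<in>E. src d \<in> V \<and> tgt d \<in> V" and "u \<in> V" and "v \<in> V"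
    and "\<exists>p. is_path E src tgt u v p \<and> (\<forall>d\<in>set p. col d = Green)"
    and "e \<in> E" and "col e = Red"
    and "\<forall>x\<in>space M. \<forall>d\<in>E. W x d > 0"
    and "\<forall>d\<in>E. (\<lambda>x. W x d) \<in> borel_measurable M"
    and "\<phi> > 0"
    and "f \<in> borel_measurable borel"
    and "\<forall>t. 0 \<le> f t \<and> f t \<le> \<phi>"
    and "\<forall>t\<le>0. f t = 0"
    and "distributed M lborel (\<lambda>x. W x e) (\<lambda>t. ennreal (f t))"
    and "prob_space.indep_set M
           {(\<lambda>x. W x e) -` A \<inter> space M | A. A \<in> sets borel}
           (sigma_sets (space M)
              {(\<lambda>x. W x d) -` A \<inter> space M | d A. d \<in> E - {e} \<and> A \<in> sets borel})"
    and "r \<ge> 0" and "\<epsilon> \<ge> 0"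
  shows "measure M {x \<in> space M. ereal r < Delta E src tgt col (W x) u v e r \<and>
                                 Delta E src tgt col (W x) u v e r \<le> ereal (r + \<epsilon>)}
           \<le> \<phi> * \<epsilon>"
proof -
  interpret prob_space M by fact
  note finE = assms(3) and Red = assms(9) and green = assms(7)
  define X where "X x = W x e" for x
  define Y where "Y x = Delta E src tgt col ((W x)(e:=0)) u v e r" for x
  have DXY: "Delta E src tgt col (W x) u v e r = ereal (X x) + Y x" for x
    unfolding X_def Y_def by (rule Delta_shift[where col=col and e=e, OF finE Red])
  define Gs where "Gs = {(\<lambda>x. W x d) -` A \<inter> space M | d A. d \<in> E - {e} \<and> A \<in> sets borel}"
  define XG where "XG = {(\<lambda>x. W x e) -` A \<inter> space M | A. A \<in> sets borel}"
  define Mo where "Mo = sigma (space M) Gs"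
  have GsP: "Gs \<subseteq> Pow (space M)" unfolding Gs_def by blast
  have sMo: "sets Mo = sigma_sets (space M) Gs" "space Mo = space M"
    unfolding Mo_def using GsP by (simp_all add: sets_measure_of space_measure_of)
  have Wmo: "\<forall>d\<in>E-{e}. (\<lambda>x. W x d) \<in> borel_measurable Mo"
  proof
    fix d assume d: "d \<in> E - {e}"
    show "(\<lambda>x. W x d) \<in> borel_measurable Mo"
    proof (rule measurableI)
      fix A :: "real set" assume "A \<in> sets borel"
      then have "(\<lambda>x. W x d) -` A \<inter> space M \<in> Gs" unfolding Gs_def using d by blast
      then show "(\<lambda>x. W x d) -` A \<inter> space Mo \<in> sets Mo" unfolding sMo by blast
    qed simp
  qed
  have YMo: "Y \<in> borel_measurable Mo"
    unfolding Y_def by (rule Delta_meas[where col=col and e=e, OF finE Red green assms(18) Wmo])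
  have YM: "Y \<in> borel_measurable M"
    unfolding Y_def by (rule Delta_meas[where col=col and e=e, OF finE Red green assms(18)]) (use assms(11) in blast)
  have XM: "X \<in> borel_measurable M" unfolding X_def using assms(11) assms(8) by blast
  have ind0: "indep_set XG (sigma_sets (space M) Gs)" using assms(17) unfolding XG_def Gs_def .
  have "Int_stable XG"
  proof (rule Int_stableI)
    fix a b assume "a \<in> XG" "b \<in> XG"
    then obtain A B where "A \<in> sets borel" "B \<in> sets borel" "a = (\<lambda>x. W x e) -` A \<inter> space M"
      "b = (\<lambda>x. W x e) -` B \<inter> space M" unfolding XG_def by blast
    then show "a \<inter> b \<in> XG" unfolding XG_def by (intro CollectI exI[of _ "A \<inter> B"]) auto
  qed
  moreover have "Int_stable (sigma_sets (space M) Gs)"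
    using sigma_algebra_sigma_sets[OF GsP] by (rule algebra.Int_stable[OF sigma_algebra.axioms(1)])
  ultimately have ind1: "indep_set (sigma_sets (space M) XG) (sigma_sets (space M) Gs)"
    using indep_set_sigma_sets[OF ind0] sigma_sets_sigma_sets_eq[OF GsP] by simp
  have YG: "sigma_sets (space M) {Y -` A \<inter> space M | A. A \<in> sets borel} \<subseteq> sigma_sets (space M) Gs"
  proof (rule sigma_sets_mono, safe)
    fix A :: "ereal set" assume "A \<in> sets borel"
    then have "Y -` A \<inter> space Mo \<in> sets Mo" using YMo by (rule measurable_sets[rotated])
    then show "Y -` A \<inter> space M \<in> sigma_sets (space M) Gs" unfolding sMo .
  qed
  have em: "(ereal :: real \<Rightarrow> ereal) \<in> borel_measurable borel" by measurable
  define X' where "X' x = ereal (X x)" for x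
  have X'M: "X' \<in> borel_measurable M" unfolding X'_def using XM by simp
  have X'G: "sigma_sets (space M) {X' -` A \<inter> space M | A. A \<in> sets borel} \<subseteq> sigma_sets (space M) XG"
  proof (rule sigma_sets_mono, safe)
    fix A :: "ereal set" assume "A \<in> sets borel"
    then have "ereal -` A \<in> sets borel" using measurable_sets[OF em] by simp
    then have "X' -` A \<inter> space M \<in> XG" unfolding XG_def X'_def X_def by (intro CollectI exI[of _ "ereal -` A"]) auto
    then show "X' -` A \<inter> space M \<in> sigma_sets (space M) XG" by blast
  qed
  have ind2: "indep_set (sigma_sets (space M) {X' -` A \<inter> space M | A. A \<in> sets borel})
                        (sigma_sets (space M) {Y -` A \<inter> space M | A. A \<in> sets borel})"
    unfolding indep_set_def
    by (rule indep_sets_mono_sets[OF ind1[unfolded indep_set_def]]) (use YG X'G in \<open>auto split: bool.split\<close>)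
  have iv: "indep_var borel X' borel Y"
    unfolding indep_var_eq using ind2 X'M YM by simp
  have J: "distr M borel X' \<Otimes>\<^sub>M distr M borel Y = distr M (borel \<Otimes>\<^sub>M borel) (\<lambda>x. (X' x, Y x))"
    using iv unfolding indep_var_distribution_eq by blast
  define A where "A = {z \<in> space (borel \<Otimes>\<^sub>M borel). ereal r < fst z + snd z \<and> fst z + snd z \<le> ereal (r + \<epsilon>)}"
  have Ameas: "A \<in> sets (borel \<Otimes>\<^sub>M borel)" unfolding A_def by measurable
  have XYm: "(\<lambda>x. (X' x, Y x)) \<in> measurable M (borel \<Otimes>\<^sub>M borel)"
    using X'M YM by (intro measurable_Pair) auto
  have Ev: "{x \<in> space M. ereal r < Delta E src tgt col (W x) u v e r \<and>
                                 Delta E src tgt col (W x) u v e r \<le> ereal (r + \<epsilon>)}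
      = (\<lambda>x. (X' x, Y x)) -` A \<inter> space M"
    unfolding A_def DXY X'_def by (auto simp: space_pair_measure)
  interpret PX: prob_space "distr M borel X'" using X'M by (intro prob_space_distr) simp
  interpret PY: prob_space "distr M borel Y" using YM by (intro prob_space_distr) simp
  interpret PP: pair_sigma_finite "distr M borel X'" "distr M borel Y"
    unfolding pair_sigma_finite_def using PX.sigma_finite_measure_axioms PY.sigma_finite_measure_axioms by blast
  have dens: "distr M lborel X = density lborel (\<lambda>t. ennreal (f t))"
    using assms(16) unfolding distributed_def X_def by blast
  have slice: "emeasure (distr M borel X') ((\<lambda>a. (a, y)) -` A) \<le> ennreal (\<phi> * \<epsilon>)" for y
  proof -
    define B where "B = {a. ereal r < a + y \<and> a + y \<le> ereal (r + \<epsilon>)}"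
    have BA: "(\<lambda>a. (a, y)) -` A = B" unfolding A_def B_def by (auto simp: space_pair_measure)
    have Bm: "B \<in> sets borel" unfolding B_def by measurable
    have Bm': "ereal -` B \<in> sets lborel" using Bm
      using measurable_sets[OF em] by simp
    have "emeasure (distr M borel X') B = emeasure M (X' -` B \<inter> space M)"
      by (rule emeasure_distr[OF X'M Bm])
    also have "X' -` B \<inter> space M = X -` (ereal -` B) \<inter> space M" unfolding X'_def by auto
    also have "emeasure M \<dots> = emeasure (distr M lborel X) (ereal -` B)"
      by (rule emeasure_distr[symmetric]) (use XM Bm' in auto)
    also have "\<dots> \<le> ennreal (\<phi> * \<epsilon>)"
    proof (cases y)
    case (real c)
    define I where "I = {r - c <.. r - c + \<epsilon>}"
    have sub: "ereal -` B \<subseteq> I" unfolding B_def I_def real by auto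
    have Im: "I \<in> sets lborel" unfolding I_def by simp
    have "emeasure (distr M lborel X) (ereal -` B) \<le> emeasure (distr M lborel X) I"
      by (rule emeasure_mono[OF sub]) (simp add: I_def)
    also have "\<dots> = (\<integral>\<^sup>+ t. ennreal (f t) * indicator I t \<partial>lborel)"
      unfolding dens using assms(13) Im by (intro emeasure_density) auto
    also have "\<dots> \<le> (\<integral>\<^sup>+ t. ennreal \<phi> * indicator I t \<partial>lborel)"
      using assms(14) by (intro nn_integral_mono) (auto split: split_indicator intro: ennreal_leI)
    also have "\<dots> = ennreal \<phi> * emeasure lborel I" using Im by (rule nn_integral_cmult_indicator)
    also have "\<dots> = ennreal (\<phi> * \<epsilon>)" unfolding I_def using assms(12,19)
      by (simp add: ennreal_mult)
    finally show ?thesis .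
  next
    case PInf
    then have "ereal -` B = {}" unfolding B_def by auto
    then show ?thesis by simp
  next
    case MInf
    then have "ereal -` B = {}" unfolding B_def by auto
    then show ?thesis by simp
  qed
  finally show ?thesis unfolding BA .
  qed
  have "emeasure M ((\<lambda>x. (X' x, Y x)) -` A \<inter> space M) = emeasure (distr M (borel \<Otimes>\<^sub>M borel) (\<lambda>x. (X' x, Y x))) A"
    by (rule emeasure_distr[symmetric, OF XYm Ameas])
  also have "\<dots> = (\<integral>\<^sup>+y. emeasure (distr M borel X') ((\<lambda>a. (a, y)) -` A) \<partial>distr M borel Y)"
    unfolding J[symmetric] using Ameas by (intro PP.emeasure_pair_measure_alt2) (simp add: J)
  also have "\<dots> \<le> (\<integral>\<^sup>+y. ennreal (\<phi> * \<epsilon>) \<partial>distr M borel Y)"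
    by (intro nn_integral_mono slice)
  also have "\<dots> = ennreal (\<phi> * \<epsilon>)" using PY.emeasure_space_1 by simp
  finally have le: "emeasure M ((\<lambda>x. (X' x, Y x)) -` A \<inter> space M) \<le> ennreal (\<phi> * \<epsilon>)" .
  show ?thesis unfolding Ev measure_def
    by (rule enn2real_leI[OF _ le]) (use assms(12,19) in simp)
qed


end
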